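(* Let $n\ge 2$ and let $f:\mathbb{R}\to[0,\infty)$ be continuous, bounded on every half-line $(-\infty,t]$, unbounded above on $[0,\infty)$, and satisfying $$\limsup_{u\to\infty}\frac{f(u)}{u^n}<\infty .$$ Then for every bounded smooth convex domain $\Omega\subset\mathbb{R}^n$ there is no convex function $u\in C^2(\Omega)$ solving $\det D^2u=f(u)$ in $\Omega$ and satisfying $\lim_{x\to\partial\Omega}u(x)=\infty$.
   Context: A solution with $\lim_{x\to\partial\Omega}u(x)=\infty$ is called a large solution. *)

theory Defs
  imports "HOL-Analysis.Analysis"
begin

definition pd :: "'n::finite \<Rightarrow> (real^'n \<Rightarrow> real) \<Rightarrow> real^'n \<Rightarrow> real" where
  "pd i f x = deriv (\<lambda>t. f (x + t *\<^sub>R axis i 1)) 0"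

fun iter_pd :: "'n::finite list \<Rightarrow> (real^'n \<Rightarrow> real) \<Rightarrow> real^'n \<Rightarrow> real" where
  "iter_pd [] f = f"
| "iter_pd (i # is) f = pd i (iter_pd is f)"

definition Ck_on :: "nat \<Rightarrow> (real^'n::finite) set \<Rightarrow> (real^'n \<Rightarrow> real) \<Rightarrow> bool" where
  "Ck_on k S f \<longleftrightarrow>
     (\<forall>is. length is \<le> k \<longrightarrow> continuous_on S (iter_pd is f)) \<and>
     (\<forall>is i x. length is < k \<longrightarrow> x \<in> S \<longrightarrow>
        (\<lambda>t. iter_pd is f (x + t *\<^sub>R axis i 1)) differentiable (at 0))"

definition smooth_on :: "(real^'n::finite) set \<Rightarrow> (real^'n \<Rightarrow> real) \<Rightarrow> bool" where
  "smooth_on S f \<longleftrightarrow> (\<forall>k. Ck_on k S f)"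

definition hessian :: "(real^'n::finite \<Rightarrow> real) \<Rightarrow> real^'n \<Rightarrow> real^'n^'n" where
  "hessian u x = (\<chi> i j. iter_pd [i, j] u x)"

definition smooth_domain :: "(real^'n::finite) set \<Rightarrow> bool" where
  "smooth_domain \<Omega> \<longleftrightarrow> open \<Omega> \<and> connected \<Omega> \<and> \<Omega> \<noteq> {} \<and>
     (\<exists>\<rho>. smooth_on UNIV \<rho> \<and> \<Omega> = {x. \<rho> x < 0} \<and>
          (\<forall>x\<in>frontier \<Omega>. \<exists>i. pd i \<rho> x \<noteq> 0))"

end

theory Submission
  imports Defs
begin

lemma tangent_ineq:
  fixes W :: "'a::real_normed_vector \<Rightarrow> real"
  assumes P: "open P" "convex P" and cvx: "convex_on P W"
  and dW: "(W has_derivative W') (at x)" and x: "x \<in> P" and y: "y \<in> P"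
  shows "W y \<ge> W x + W' (y - x)"
proof -
  define d where "d = y - x"
  have lin: "bounded_linear W'" using dW by (rule has_derivative_bounded_linear)
  have D: "((\<lambda>t::real. W (x + t *\<^sub>R d)) has_real_derivative W' d) (at 0)"
  proof -
    have h1: "((\<lambda>t::real. x + t *\<^sub>R d) has_derivative (\<lambda>t. t *\<^sub>R d)) (at 0)"
      by (auto intro!: derivative_eq_intros)
    have h2: "(W has_derivative W') (at (x + 0 *\<^sub>R d))" using dW by simp
    have "((\<lambda>t::real. W (x + t *\<^sub>R d)) has_derivative (\<lambda>t. W' (t *\<^sub>R d))) (at 0)"
      using has_derivative_compose[OF h1 h2] by (simp add: o_def)
    moreover have "(\<lambda>t. W' (t *\<^sub>R d)) = (\<lambda>t. W' d * t)"
      using lin by (auto simp: linear_simps)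
    ultimately show ?thesis by (simp add: has_field_derivative_def)
  qed
  have lim: "((\<lambda>t. (W (x + t *\<^sub>R d) - W x) / t) \<longlongrightarrow> W' d) (at_right 0)"
  proof -
    have "((\<lambda>t. (W (x + t *\<^sub>R d) - W (x + 0 *\<^sub>R d)) / (t - 0)) \<longlongrightarrow> W' d) (at 0)"
      using D unfolding has_field_derivative_iff .
    then have "((\<lambda>t. (W (x + t *\<^sub>R d) - W x) / t) \<longlongrightarrow> W' d) (at 0)" by simp
    then show ?thesis by (rule tendsto_mono[OF at_le, rotated]) simp
  qed
  have ev: "eventually (\<lambda>t. (W (x + t *\<^sub>R d) - W x) / t \<le> W y - W x) (at_right 0)"
  proof -
    have "eventually (\<lambda>t::real. 0 < t \<and> t < 1) (at_right 0)"
      by (auto simp: eventually_at_right_field intro!: exI[of _ 1])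
    then show ?thesis
    proof (rule eventually_mono)
      fix t :: real assume t: "0 < t \<and> t < 1"
      have "x + t *\<^sub>R d = (1 - t) *\<^sub>R x + t *\<^sub>R y" by (simp add: d_def algebra_simps)
      moreover have "W ((1 - t) *\<^sub>R x + t *\<^sub>R y) \<le> (1 - t) * W x + t * W y"
        using cvx x y t by (intro convex_onD) auto
      ultimately have "W (x + t *\<^sub>R d) \<le> (1 - t) * W x + t * W y" by metis
      then have "W (x + t *\<^sub>R d) - W x \<le> t * (W y - W x)" by (simp add: algebra_simps)
      then show "(W (x + t *\<^sub>R d) - W x) / t \<le> W y - W x" using t by (simp add: divide_simps mult.commute)
    qed
  qed
  have "W' d \<le> W y - W x"
    by (rule tendsto_upperbound[OF lim ev]) simp
  then show ?thesis by (simp add: d_def)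
qed

lemma exists_grad_min:
  fixes W :: "'a::euclidean_space \<Rightarrow> real"
  assumes P: "open P" "bounded P" and x0: "x0 \<in> P"
  and dW: "\<And>x. x\<in>P \<Longrightarrow> (W has_derivative (\<lambda>h. G x \<bullet> h)) (at x)"
  and cl: "\<And>c. closed {x\<in>P. W x \<le> c}"
  shows "\<exists>y\<in>P. G y = q \<and> (\<forall>z\<in>P. W y - q \<bullet> y \<le> W z - q \<bullet> z)"
proof -
  obtain R where R: "\<And>z. z \<in> P \<Longrightarrow> norm z \<le> R" using P(2) by (auto simp: bounded_iff)
  have R0: "0 \<le> R" using R[OF x0] norm_ge_zero[of x0] by linarith
  define c where "c = W x0 + 2 * R * norm q"
  define K where "K = {x\<in>P. W x \<le> c}"
  have "0 \<le> R * norm q" using R0 by simp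
  then have x0K: "x0 \<in> K" using x0 by (auto simp: K_def c_def)
  have "compact K" unfolding K_def
    using cl[of c] P(2) by (metis (no_types, lifting) bounded_subset compact_eq_bounded_closed mem_Collect_eq subsetI)
  have contW: "continuous_on P W"
    using dW by (meson continuous_at_imp_continuous_on has_derivative_continuous)
  have "continuous_on K (\<lambda>z. W z - q \<bullet> z)"
    by (rule continuous_on_subset[of P]) (auto simp: K_def intro!: continuous_intros contW)
  then obtain y where yK: "y \<in> K" and ymin: "\<And>z. z \<in> K \<Longrightarrow> W y - q \<bullet> y \<le> W z - q \<bullet> z"
    using continuous_attains_inf[OF \<open>compact K\<close>] x0K by blast
  have yP: "y \<in> P" using yK by (auto simp: K_def)
  have glob: "W y - q \<bullet> y \<le> W z - q \<bullet> z" if z: "z \<in> P" for z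
  proof (cases "z \<in> K")
    case True then show ?thesis by (rule ymin)
  next
    case False
    then have "W z > c" using z by (auto simp: K_def)
    have "\<bar>q \<bullet> z\<bar> \<le> norm q * R" using Cauchy_Schwarz_ineq2[of q z] R[OF z]
      by (meson mult_left_mono norm_ge_zero order_trans)
    moreover have "\<bar>q \<bullet> x0\<bar> \<le> norm q * R" using Cauchy_Schwarz_ineq2[of q x0] R[OF x0]
      by (meson mult_left_mono norm_ge_zero order_trans)
    moreover have "W y - q \<bullet> y \<le> W x0 - q \<bullet> x0" using ymin x0K by blast
    moreover have "2 * R * norm q = 2 * (norm q * R)" by simp
    ultimately show ?thesis using \<open>W z > c\<close> unfolding c_def by linarith
  qed
  have der: "((\<lambda>z. W z - q \<bullet> z) has_derivative (\<lambda>h. G y \<bullet> h - q \<bullet> h)) (at y)"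
    by (rule has_derivative_diff[OF dW[OF yP]]) (auto intro!: derivative_eq_intros)
  have "eventually (\<lambda>z. z \<in> P) (at y)"
    using P(1) yP by (simp add: eventually_at_topological) blast
  then have "eventually (\<lambda>z. W y - q \<bullet> y \<le> W z - q \<bullet> z) (at y)"
    by (rule eventually_mono) (rule glob)
  from has_derivative_local_min[OF der this]
  have "(\<lambda>h. G y \<bullet> h - q \<bullet> h) = (\<lambda>h. 0)" .
  then have "G y \<bullet> (G y - q) - q \<bullet> (G y - q) = 0" by metis
  then have "(G y - q) \<bullet> (G y - q) = 0" by (simp add: inner_diff_left)
  then have "G y = q" by simp
  then show ?thesis using yP glob by blast
qed

lemma det_shear:
  fixes v :: "real^'m::finite"
  assumes vk: "v$k = 0"
  shows "det (matrix (\<lambda>w. w + (w$k) *\<^sub>R v)) = 1"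
proof -
  define M where "M = matrix (\<lambda>w::real^'m. w + (w$k) *\<^sub>R v)"
  have T: "transpose M = (\<chi> r. if r = k then row k (mat 1) + v else row r (mat 1))"
    by (auto simp: M_def transpose_def matrix_def row_def vec_eq_iff mat_def axis_def vk)
  have "v \<in> vec.span {row j (mat 1 :: real^'m^'m) |j. j \<noteq> k}"
  proof -
    have "v = (\<Sum>j\<in>UNIV - {k}. (v$j) *s row j (mat 1 :: real^'m^'m))"
      by (auto simp: vec_eq_iff row_def mat_def sum_component vk if_distrib
            sum.delta_remove cong: if_cong)
    also have "\<dots> \<in> vec.span {row j (mat 1 :: real^'m^'m) |j. j \<noteq> k}"
      by (intro vec.span_sum vec.span_scale vec.span_base) auto
    finally show ?thesis .
  qed
  then have "det (transpose M) = 1"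
    unfolding T by (subst det_row_span) auto
  then show ?thesis by (simp add: M_def)
qed

lemma aux_lin: fixes z \<tau> L0 :: real shows "z \<le> 1 / 2 * z + \<tau> / 4 \<Longrightarrow> L0 + 1 \<le> \<tau> \<Longrightarrow> 0 \<le> L0 \<Longrightarrow> z < \<tau>" by linarith

lemma grad_est:
  fixes W :: "real^'m::{finite,wellorder} \<Rightarrow> real" and G :: "real^'m::_ \<Rightarrow> real^'m::_" and C D L0 :: real
  assumes P: "open P" "bounded P" "convex P"
  and cvx: "convex_on P W"
  and dW: "\<And>x. x\<in>P \<Longrightarrow> (W has_derivative (\<lambda>h. G x \<bullet> h)) (at x)"
  and dG: "\<And>x. x\<in>P \<Longrightarrow> (G has_derivative G' x) (at x)"
  and detb: "\<And>x. x\<in>P \<Longrightarrow> \<bar>det (matrix (G' x))\<bar> \<le> C * (\<bar>W x\<bar> + 1) ^ card (UNIV::'m::_ set)"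
  and C: "C \<ge> 0"
  and cl: "\<And>c. closed {x\<in>P. W x \<le> c}"
  and L0: "\<And>z. z\<in>P \<Longrightarrow> W z \<ge> - L0" "L0 \<ge> 0"
  and D: "\<And>x y. x\<in>P \<Longrightarrow> y\<in>P \<Longrightarrow> norm (x - y) \<le> D" "D > 0"
  and x: "x \<in> P"
  shows "norm (G x) \<le> (2 * card (UNIV::'m::_ set) * C * 2 ^ card (UNIV::'m::_ set) * measure lebesgue P * (2 * D * card (UNIV::'m::_ set)) ^ (card (UNIV::'m::_ set) - 1))
            * (W x + 2 * L0 + 1)"
proof -
  define N where "N = card (UNIV::'m::_ set)"
  have N1: "N \<ge> 1" by (simp add: N_def Suc_le_eq)
  define t where "t = W x"
  define \<tau> where "\<tau> = t + 2 * L0 + 1"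
  define s where "s = t + \<tau>"
  define S where "S = {y\<in>P. W y < s}"
  define p where "p = G x"
  define mP where "mP = measure lebesgue P"
  have \<tau>1: "\<tau> \<ge> L0 + 1" using L0(1)[OF x] by (simp add: \<tau>_def t_def)
  have mP0: "mP \<ge> 0" by (simp add: mP_def)
  define K where "K = 2 * N * C * 2 ^ N * mP * (2 * D * N) ^ (N - 1)"
  have K0: "K \<ge> 0" using C mP0 D(2) by (simp add: K_def)
  show ?thesis
  proof (cases "p = 0")
    case True
    then show ?thesis using K0 \<tau>1 L0(2) by (simp add: p_def N_def K_def mP_def \<tau>_def t_def)
  next
    case False
    obtain k where k: "\<And>j. \<bar>p$j\<bar> \<le> \<bar>p$k\<bar>"
    proof -
      have "Max (range (\<lambda>j. \<bar>p$j\<bar>)) \<in> range (\<lambda>j. \<bar>p$j\<bar>)" by (intro Max_in) auto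
      then obtain k where kk: "Max (range (\<lambda>j. \<bar>p$j\<bar>)) = \<bar>p$k\<bar>" by (rule rangeE)
      have "\<bar>p$j\<bar> \<le> \<bar>p$k\<bar>" for j unfolding kk[symmetric] by (rule Max_ge) auto
      then show ?thesis by (rule that)
    qed
    have np: "norm p \<le> N * \<bar>p$k\<bar>"
    proof -
      have "norm p \<le> (\<Sum>j\<in>UNIV. \<bar>p$j\<bar>)" by (rule norm_le_l1_cart)
      also have "\<dots> \<le> (\<Sum>j\<in>(UNIV::'m::_ set). \<bar>p$k\<bar>)" by (intro sum_mono k)
      finally show ?thesis by (simp add: N_def)
    qed
    have pk: "p$k \<noteq> 0" using np False by auto
    define \<epsilon> where "\<epsilon> = \<tau> / (4 * D * N)"
    have \<epsilon>0: "\<epsilon> > 0" using \<tau>1 L0(2) D(2) N1 by (simp add: \<epsilon>_def)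
    define a where "a = (\<chi> j. if j = k then min 0 (p$k/2) else - \<epsilon>)"
    define b where "b = (\<chi> j. if j = k then max 0 (p$k/2) else \<epsilon>)"
    define v where "v = (1 / p$k) *\<^sub>R p - axis k 1"
    define L where "L = (\<lambda>w. w + (w$k) *\<^sub>R v)"
    have vk: "v$k = 0" using pk by (simp add: v_def axis_def)
    have linL: "linear L" unfolding L_def by (auto intro!: linearI simp: algebra_simps)
    have detL: "det (matrix L) = 1" unfolding L_def by (rule det_shear[OF vk])
    have box: "cbox a b \<noteq> {}" using \<epsilon>0 by (auto simp: a_def b_def interval_ne_empty_cart)
    have mbox: "measure lebesgue (cbox a b) = \<bar>p$k\<bar> / 2 * (2 * \<epsilon>) ^ (N - 1)"
    proof -
      have "measure lebesgue (cbox a b) = measure lborel (cbox a b)" by simp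
      also have "\<dots> = (\<Prod>j\<in>UNIV. b$j - a$j)" by (rule content_cbox_cart[OF box])
      also have "\<dots> = (b$k - a$k) * (\<Prod>j\<in>UNIV - {k}. b$j - a$j)"
        by (rule prod.remove) auto
      also have "(\<Prod>j\<in>UNIV - {k}. b$j - a$j) = (\<Prod>j\<in>UNIV - {k}. 2 * \<epsilon>)"
        by (rule prod.cong) (auto simp: a_def b_def)
      also have "\<dots> = (2 * \<epsilon>) ^ (N - 1)"
        by (simp add: N_def card_Diff_singleton)
      also have "b$k - a$k = \<bar>p$k\<bar> / 2" by (simp add: a_def b_def)
      finally show ?thesis .
    qed
    have sub: "L ` cbox a b \<subseteq> G ` S"
    proof
      fix q assume "q \<in> L ` cbox a b"
      then obtain w where w: "w \<in> cbox a b" and q: "q = L w" by auto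
      define \<mu> where "\<mu> = w$k / p$k"
      define e where "e = w - (w$k) *\<^sub>R axis k 1"
      have qe: "q = \<mu> *\<^sub>R p + e" using pk
        by (simp add: q L_def v_def \<mu>_def e_def algebra_simps vec_eq_iff axis_def)
      have wc: "\<And>i. a$i \<le> w$i \<and> w$i \<le> b$i" using w by (simp add: mem_box_cart)
      have \<mu>0: "0 \<le> \<mu>" and \<mu>1: "\<mu> \<le> 1/2"
      proof -
        have wk: "min 0 (p$k/2) \<le> w$k" "w$k \<le> max 0 (p$k/2)" using wc[of k] by (auto simp: a_def b_def)
        show "0 \<le> \<mu>" "\<mu> \<le> 1/2"
        proof (atomize (full), cases "p$k > 0")
          case True
          then show "0 \<le> \<mu> \<and> \<mu> \<le> 1/2" using wk by (auto simp: \<mu>_def divide_simps)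
        next
          case False
          then have "p$k < 0" using pk by linarith
          then show "0 \<le> \<mu> \<and> \<mu> \<le> 1/2" using wk by (auto simp: \<mu>_def divide_simps)
        qed
      qed
      have ne: "norm e \<le> N * \<epsilon>"
      proof -
        have "norm e \<le> (\<Sum>j\<in>UNIV. \<bar>e$j\<bar>)" by (rule norm_le_l1_cart)
        also have "\<dots> \<le> (\<Sum>j\<in>(UNIV::'m::_ set). \<epsilon>)"
        proof (rule sum_mono)
          fix j :: 'm
          show "\<bar>e$j\<bar> \<le> \<epsilon>"
          proof (cases "j = k")
            case True then show ?thesis using \<epsilon>0 by (simp add: e_def)
          next
            case False then show ?thesis using wc[of j] by (simp add: e_def a_def b_def axis_def abs_le_iff)
          qed
        qed
        finally show ?thesis by (simp add: N_def)
      qed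
      obtain y where yP: "y \<in> P" and Gy: "G y = q" and ymin: "W y - q \<bullet> y \<le> W x - q \<bullet> x"
        using exists_grad_min[OF P(1) P(2) x dW cl, of q] x by blast
      have tan: "W x + p \<bullet> (y - x) \<le> W y"
        using tangent_ineq[OF P(1) P(3) cvx dW[OF x] x yP] by (simp add: p_def)
      have qyx: "q \<bullet> (y - x) = \<mu> * (p \<bullet> (y - x)) + e \<bullet> (y - x)"
        by (simp add: qe inner_add_left)
      have "e \<bullet> (y - x) \<le> norm e * norm (y - x)" by (rule norm_cauchy_schwarz)
      also have "\<dots> \<le> (N * \<epsilon>) * D"
        by (rule mult_mono[OF ne D(1)[OF yP x]]) (use \<epsilon>0 in auto)
      also have "(N * \<epsilon>) * D = \<tau> / 4" using D(2) N1 by (simp add: \<epsilon>_def field_simps)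
      finally have ee: "e \<bullet> (y - x) \<le> \<tau> / 4" .
      have m1: "\<mu> * (p \<bullet> (y - x)) \<le> \<mu> * (W y - t)"
        using tan \<mu>0 by (intro mult_left_mono) (auto simp: t_def)
      have h1: "W y - t \<le> \<mu> * (W y - t) + \<tau> / 4"
        using ymin qyx ee m1 by (simp add: t_def inner_diff_right) 
      have "W y - t < \<tau>"
      proof (cases "W y - t \<ge> 0")
        case True
        then have "\<mu> * (W y - t) \<le> 1/2 * (W y - t)" using \<mu>1 by (intro mult_right_mono) auto
        then have "W y - t \<le> 1/2 * (W y - t) + \<tau> / 4" using h1 by linarith
        then show ?thesis using \<tau>1 L0(2) by (rule aux_lin)
      next
        case False then show ?thesis using \<tau>1 L0(2) by linarith
      qed
      then have "y \<in> S" using yP by (simp add: S_def s_def)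
      then show "q \<in> G ` S" using Gy by blast
    qed
    have contW: "continuous_on P W"
      using dW by (meson continuous_at_imp_continuous_on has_derivative_continuous)
    have Seq: "S = P \<inter> W -` {..<s}" by (auto simp: S_def)
    have Sopen: "open S" unfolding Seq by (rule continuous_open_preimage[OF contW P(1)]) auto
    have SP: "S \<subseteq> P" by (auto simp: S_def)
    have Pl: "P \<in> lmeasurable" by (rule lmeasurable_open[OF P(2) P(1)])
    have Sl: "S \<in> lmeasurable" by (rule lmeasurable_open[OF bounded_subset[OF P(2) SP] Sopen])
    have mS: "measure lebesgue S \<le> mP" unfolding mP_def
      by (rule measure_mono_fmeasurable[OF SP]) (use Sl Pl in \<open>auto simp: fmeasurableD\<close>)
    have bdS: "\<And>y. y \<in> S \<Longrightarrow> \<bar>det (matrix (G' y))\<bar> \<le> C * (2 * \<tau>) ^ N"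
    proof -
      fix y assume y: "y \<in> S"
      then have yP: "y \<in> P" and ys: "W y < s" by (auto simp: S_def)
      have "\<bar>W y\<bar> + 1 \<le> 2 * \<tau>" using ys L0(1)[OF yP] L0(1)[OF x] L0(2)
        by (auto simp: s_def \<tau>_def t_def abs_if)
      then have "(\<bar>W y\<bar> + 1) ^ N \<le> (2 * \<tau>) ^ N" by (intro power_mono) auto
      then have "C * (\<bar>W y\<bar> + 1) ^ N \<le> C * (2 * \<tau>) ^ N" using C by (intro mult_left_mono) auto
      then show "\<bar>det (matrix (G' y))\<bar> \<le> C * (2 * \<tau>) ^ N" using detb[OF yP] by (simp add: N_def)
    qed
    have dGS: "\<And>y. y \<in> S \<Longrightarrow> (G has_derivative G' y) (at y within S)"
      using dG SP by (blast intro: has_derivative_at_withinI)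
    have intS: "(\<lambda>y. \<bar>det (matrix (G' y))\<bar>) integrable_on S"
    proof (rule measurable_bounded_by_integrable_imp_integrable)
      show "(\<lambda>y. \<bar>det (matrix (G' y))\<bar>) \<in> borel_measurable (lebesgue_on S)"
        using borel_measurable_det_Jacobian[OF fmeasurableD[OF Sl] dGS] by measurable
      show "(\<lambda>y. C * (2 * \<tau>) ^ N) integrable_on S" by (rule integrable_on_const[OF Sl])
      show "\<And>y. y \<in> S \<Longrightarrow> norm \<bar>det (matrix (G' y))\<bar> \<le> C * (2 * \<tau>) ^ N" using bdS by simp
      show "S \<in> sets lebesgue" using Sl by (simp add: fmeasurableD)
    qed
    have GSl: "G ` S \<in> lmeasurable" and mGS: "measure lebesgue (G ` S) \<le> C * (2 * \<tau>) ^ N * measure lebesgue S"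
      using measurable_bounded_differentiable_image[OF Sl dGS intS bdS]
        measure_bounded_differentiable_image[OF Sl dGS intS bdS] by auto
    have mLB: "measure lebesgue (L ` cbox a b) = measure lebesgue (cbox a b)"
      using measure_linear_image[OF linL, of "cbox a b"] detL by simp
    have "measure lebesgue (L ` cbox a b) \<le> measure lebesgue (G ` S)"
      by (rule measure_mono_fmeasurable[OF sub _ GSl]) (simp add: measurable_linear_image[OF linL] fmeasurableD)
    then have ineq0: "measure lebesgue (L ` cbox a b) \<le> measure lebesgue (G ` S)" .
    have "measure lebesgue (cbox a b) \<le> measure lebesgue (G ` S)" using ineq0 mLB by simp
    also have "\<dots> \<le> C * (2 * \<tau>) ^ N * measure lebesgue S" by (rule mGS)
    also have "\<dots> \<le> C * (2 * \<tau>) ^ N * mP"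
      using mS C \<tau>1 L0(2) by (intro mult_left_mono) auto
    finally have ineq: "\<bar>p$k\<bar> / 2 * (2 * \<epsilon>) ^ (N - 1) \<le> C * (2 * \<tau>) ^ N * mP"
      using mLB mbox by simp
    have \<tau>0: "\<tau> > 0" using \<tau>1 L0(2) by linarith
    have c0: "2 * D * N > 0" using D(2) N1 by simp
    have e2: "2 * \<epsilon> = \<tau> / (2 * D * N)" by (simp add: \<epsilon>_def field_simps)
    have Q: "(2 * \<epsilon>) ^ (N - 1) * (2 * D * N) ^ (N - 1) = \<tau> ^ (N - 1)"
      unfolding e2 power_mult_distrib[symmetric] using c0 D(2) by simp
    have T: "(2 * \<tau>) ^ N = 2 ^ N * (\<tau> ^ (N - 1) * \<tau>)"
    proof -
      have "N = Suc (N - 1)" using N1 by simp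
      then have "\<tau> ^ N = \<tau> ^ (N - 1) * \<tau>" by (metis power_Suc2)
      then show ?thesis by (simp add: power_mult_distrib)
    qed
    define Z where "Z = 2 * C * 2 ^ N * \<tau> * mP * (2 * D * N) ^ (N - 1)"
    have "\<bar>p$k\<bar> * \<tau> ^ (N - 1) = 2 * (\<bar>p$k\<bar> / 2 * (2 * \<epsilon>) ^ (N - 1)) * (2 * D * N) ^ (N - 1)"
      unfolding Q[symmetric] by (simp add: algebra_simps)
    also have "\<dots> \<le> 2 * (C * (2 * \<tau>) ^ N * mP) * (2 * D * N) ^ (N - 1)"
      using ineq c0 by (intro mult_right_mono mult_left_mono) auto
    also have "\<dots> = Z * \<tau> ^ (N - 1)" unfolding T Z_def by (simp add: algebra_simps)
    finally have "\<bar>p$k\<bar> \<le> Z" using \<tau>0 by (simp add: mult_le_cancel_right)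
    then have "norm p \<le> N * Z" using np N1 by (meson mult_left_mono of_nat_0_le_iff order_trans)
    also have "N * Z = K * \<tau>" by (simp add: Z_def K_def algebra_simps)
    finally show ?thesis by (simp add: p_def K_def N_def mP_def \<tau>_def t_def)
  qed
qed

lemma main_contra:
  fixes W :: "real^'m::{finite,wellorder} \<Rightarrow> real" and G :: "real^'m::_ \<Rightarrow> real^'m::_" and C :: real
  assumes P: "open P" "bounded P" "convex P" "P \<noteq> {}"
  and cvx: "convex_on P W"
  and dW: "\<And>x. x\<in>P \<Longrightarrow> (W has_derivative (\<lambda>h. G x \<bullet> h)) (at x)"
  and dG: "\<And>x. x\<in>P \<Longrightarrow> (G has_derivative G' x) (at x)"
  and detb: "\<And>x. x\<in>P \<Longrightarrow> \<bar>det (matrix (G' x))\<bar> \<le> C * (\<bar>W x\<bar> + 1) ^ card (UNIV::'m::_ set)"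
  and C: "C \<ge> 0"
  and cl: "\<And>c. closed {x\<in>P. W x \<le> c}"
  and unb: "\<not> bdd_above (W ` P)"
  shows False
proof -
  obtain x0 where x0: "x0 \<in> P" using P(4) by blast
  define D where "D = diameter P + 1"
  have Dd: "\<And>x y. x\<in>P \<Longrightarrow> y\<in>P \<Longrightarrow> norm (x - y) \<le> D"
    using diameter_bounded_bound[OF P(2)] by (fastforce simp: D_def dist_norm)
  have D0: "D > 0" using diameter_ge_0[OF P(2)] by (simp add: D_def)
  define L0 where "L0 = \<bar>W x0\<bar> + norm (G x0) * D"
  have L00: "L0 \<ge> 0" using D0 by (simp add: L0_def)
  have Wlow: "W z \<ge> - L0" if z: "z \<in> P" for z
  proof -
    have "W x0 + G x0 \<bullet> (z - x0) \<le> W z" using tangent_ineq[OF P(1) P(3) cvx dW[OF x0] x0 z] by simp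
    moreover have "\<bar>G x0 \<bullet> (z - x0)\<bar> \<le> norm (G x0) * D"
      using Cauchy_Schwarz_ineq2[of "G x0" "z - x0"] Dd[OF z x0]
      by (meson mult_left_mono norm_ge_zero order_trans)
    ultimately show ?thesis by (simp add: L0_def)
  qed
  define K where "K = (2 * card (UNIV::'m::_ set) * C * 2 ^ card (UNIV::'m::_ set) * measure lebesgue P
     * (2 * D * card (UNIV::'m::_ set)) ^ (card (UNIV::'m::_ set) - 1))"
  have gb: "norm (G x) \<le> K * (W x + 2 * L0 + 1)" if "x \<in> P" for x
    unfolding K_def
    by (rule grad_est[OF P(1-3) cvx dW dG detb C cl Wlow L00 Dd D0 that])
  define V where "V = (\<lambda>x. W x + 2 * L0 + 1)"
  have V1: "V x \<ge> 1" if "x \<in> P" for x using Wlow[OF that] L00 by (simp add: V_def)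
  have K0: "K \<ge> 0" using gb[OF x0] V1[OF x0] by (smt (verit, best) V_def norm_ge_zero zero_le_mult_iff)
  have dF: "((\<lambda>x. ln (V x)) has_derivative (\<lambda>h. (G x \<bullet> h) / V x)) (at x within P)" if x: "x \<in> P" for x
  proof -
    have dV: "(V has_derivative (\<lambda>h. G x \<bullet> h)) (at x)"
      unfolding V_def by (rule has_derivative_add_const)+ (rule dW[OF x])
    have "((\<lambda>x. ln (V x)) has_derivative (\<lambda>h. inverse (V x) * (G x \<bullet> h))) (at x)"
      using V1[OF x] by (auto intro!: derivative_eq_intros dV)
    then show ?thesis by (auto simp: field_simps intro: has_derivative_at_withinI)
  qed
  have ob: "onorm (\<lambda>h. (G x \<bullet> h) / V x) \<le> K" if x: "x \<in> P" for x
  proof (rule onorm_le)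
    fix h
    have "norm ((G x \<bullet> h) / V x) = \<bar>G x \<bullet> h\<bar> / V x" using V1[OF x] by simp
    also have "\<dots> \<le> norm (G x) * norm h / V x"
      using V1[OF x] by (intro divide_right_mono Cauchy_Schwarz_ineq2) auto
    also have "\<dots> \<le> K * V x * norm h / V x"
      using V1[OF x] gb[OF x] by (intro divide_right_mono mult_right_mono) (auto simp: V_def)
    also have "\<dots> = K * norm h" using V1[OF x] by simp
    finally show "norm ((G x \<bullet> h) / V x) \<le> K * norm h" .
  qed
  have "bdd_above (W ` P)"
  proof (rule bdd_aboveI2)
    fix y assume y: "y \<in> P"
    have "norm (ln (V y) - ln (V x0)) \<le> K * norm (y - x0)"
      by (rule differentiable_bound[OF P(3) dF ob y x0])
    also have "\<dots> \<le> K * D" using K0 Dd[OF y x0] by (intro mult_left_mono) auto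
    finally have "ln (V y) \<le> ln (V x0) + K * D" by simp
    then have "V y \<le> exp (ln (V x0) + K * D)"
      using V1[OF y] by (metis exp_le_cancel_iff exp_ln order_less_le_trans zero_less_one)
    then show "W y \<le> exp (ln (V x0) + K * D) - 2 * L0 - 1" by (simp add: V_def)
  qed
  with unb show False by blast
qed

lemma pd_deriv:
  assumes "(\<lambda>t. g (y + t *\<^sub>R axis i 1)) differentiable (at 0)"
  shows "((\<lambda>t. g (y + t *\<^sub>R axis i 1)) has_real_derivative pd i g y) (at 0)"
  using assms unfolding pd_def by (simp add: DERIV_deriv_iff_real_differentiable)

lemma pd_deriv_shift:
  assumes "(\<lambda>s. g ((y + t *\<^sub>R axis i 1) + s *\<^sub>R axis i 1)) differentiable (at 0)"
  shows "((\<lambda>t. g (y + t *\<^sub>R axis i 1)) has_real_derivative pd i g (y + t *\<^sub>R axis i 1)) (at t)"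
proof -
  have "((\<lambda>s. g ((y + t *\<^sub>R axis i 1) + s *\<^sub>R axis i 1)) has_real_derivative pd i g (y + t *\<^sub>R axis i 1)) (at 0)"
    by (rule pd_deriv[OF assms])
  then have "((\<lambda>s. g (y + (s + t) *\<^sub>R axis i 1)) has_real_derivative pd i g (y + t *\<^sub>R axis i 1)) (at 0)"
    by (simp add: algebra_simps)
  then show ?thesis using DERIV_shift[of "\<lambda>t. g (y + t *\<^sub>R axis i 1)" _ 0 t] by simp
qed

lemma partials_has_derivative:
  fixes g :: "real^'n::finite \<Rightarrow> real"
  assumes S: "open S" and x: "x \<in> S"
  and dif: "\<And>y i. y \<in> S \<Longrightarrow> (\<lambda>t. g (y + t *\<^sub>R axis i 1)) differentiable (at 0)"
  and cont: "\<And>i. continuous_on S (pd i g)"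
  shows "(g has_derivative (\<lambda>h. \<Sum>i\<in>UNIV. pd i g x * h$i)) (at x)"
  unfolding has_derivative_at_alt
proof (intro conjI allI impI)
  show "bounded_linear (\<lambda>h. \<Sum>i\<in>UNIV. pd i g x * h$i)"
    by (intro bounded_linear_sum bounded_linear_compose[OF bounded_linear_mult_right bounded_linear_vec_nth])
next
  fix e :: real assume e: "e > 0"
  define N where "N = card (UNIV :: 'n set)"
  have N1: "N \<ge> 1" by (simp add: N_def Suc_le_eq)
  define e' where "e' = e / N"
  have e': "e' > 0" using e N1 by (simp add: e'_def)
  have ev1: "\<forall>\<^sub>F z in at x. dist (pd i g z) (pd i g x) < e'" for i
  proof -
    have "(pd i g \<longlongrightarrow> pd i g x) (at x within S)" using cont[of i] x by (simp add: continuous_on_def)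
    then have "(pd i g \<longlongrightarrow> pd i g x) (at x)" using at_within_open[OF x S] by simp
    then show ?thesis using e' by (rule tendstoD)
  qed
  have "\<forall>\<^sub>F z in at x. \<forall>i. dist (pd i g z) (pd i g x) < e'"
    by (rule eventually_all_finite) (use ev1 in auto)
  moreover have "\<forall>\<^sub>F z in at x. z \<in> S" using S x by (rule eventually_at_in_open')
  ultimately have "\<forall>\<^sub>F z in at x. z \<in> S \<and> (\<forall>i. dist (pd i g z) (pd i g x) < e')"
    by eventually_elim auto
  then obtain d where d: "d > 0" and dz: "\<And>z. z \<noteq> x \<Longrightarrow> dist z x < d \<Longrightarrow> z \<in> S \<and> (\<forall>i. dist (pd i g z) (pd i g x) < e')"
    unfolding eventually_at by blast
  have dz': "z \<in> S \<and> (\<forall>i. \<bar>pd i g z - pd i g x\<bar> \<le> e')" if "dist z x < d" for z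
    using dz[of z] that x e' by (cases "z = x") (auto simp: dist_real_def less_imp_le)
  show "\<exists>d>0. \<forall>y. norm (y - x) < d \<longrightarrow>
            norm (g y - g x - (\<Sum>i\<in>UNIV. pd i g x * (y - x)$i)) \<le> e * norm (y - x)"
  proof (intro exI[of _ d] conjI allI impI d)
    fix y assume y: "norm (y - x) < d"
    define h where "h = y - x"
    define hv where "hv = (\<lambda>A. \<chi> j. if j \<in> A then h$j else 0)"
    have tel: "\<bar>g (x + hv A) - g x - (\<Sum>i\<in>A. pd i g x * h$i)\<bar> \<le> e' * (\<Sum>i\<in>A. \<bar>h$i\<bar>)"
      if "finite A" for A
      using that
    proof (induction A rule: finite_induct)
      case empty
      have "hv {} = 0" by (simp add: hv_def vec_eq_iff)
      then show ?case by simp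
    next
      case (insert i A)
      define z0 where "z0 = x + hv A"
      have hvi: "x + hv (insert i A) = z0 + h$i *\<^sub>R axis i 1"
        using insert(2) by (auto simp: z0_def hv_def vec_eq_iff axis_def)
      define \<psi> where "\<psi> = (\<lambda>t. g (z0 + t *\<^sub>R axis i 1) - pd i g x * t)"
      have inball: "dist (z0 + t *\<^sub>R axis i 1) x < d" if t: "t \<in> closed_segment 0 (h$i)" for t
      proof -
        have tb: "\<bar>t\<bar> \<le> \<bar>h$i\<bar>" using t by (auto simp: closed_segment_eq_real_ivl split: if_splits)
        have "norm (z0 + t *\<^sub>R axis i 1 - x) \<le> norm h"
        proof (rule norm_le_componentwise_cart)
          fix j
          show "norm ((z0 + t *\<^sub>R axis i 1 - x)$j) \<le> norm (h$j)"
            using tb insert(2) by (auto simp: z0_def hv_def axis_def)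
        qed
        then show ?thesis using y by (simp add: dist_norm h_def)
      qed
      have d\<psi>: "(\<psi> has_derivative (\<lambda>s. s * (pd i g (z0 + t *\<^sub>R axis i 1) - pd i g x)))
                  (at t within closed_segment 0 (h$i))" if t: "t \<in> closed_segment 0 (h$i)" for t
      proof -
        have zS: "z0 + t *\<^sub>R axis i 1 \<in> S" using dz' inball[OF t] by blast
        have "((\<lambda>t. g (z0 + t *\<^sub>R axis i 1)) has_real_derivative pd i g (z0 + t *\<^sub>R axis i 1)) (at t)"
          by (rule pd_deriv_shift) (rule dif[OF zS])
        then have "(\<psi> has_real_derivative (pd i g (z0 + t *\<^sub>R axis i 1) - pd i g x)) (at t)"
          unfolding \<psi>_def by (auto intro!: derivative_eq_intros)
        then have "(\<psi> has_derivative (\<lambda>s. (pd i g (z0 + t *\<^sub>R axis i 1) - pd i g x) * s)) (at t)"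
          by (simp add: has_field_derivative_def)
        then have "(\<psi> has_derivative (\<lambda>s. s * (pd i g (z0 + t *\<^sub>R axis i 1) - pd i g x))) (at t)"
          by (simp add: mult.commute)
        then show ?thesis by (rule has_derivative_at_withinI)
      qed
      have "norm (\<psi> (h$i) - \<psi> 0) \<le> e' * norm (h$i - 0)"
      proof (rule differentiable_bound[OF convex_closed_segment d\<psi>])
        fix t assume t: "t \<in> closed_segment 0 (h$i)"
        show "onorm (\<lambda>s. s * (pd i g (z0 + t *\<^sub>R axis i 1) - pd i g x)) \<le> e'"
        proof (rule onorm_le)
          fix s :: real
          have "\<bar>pd i g (z0 + t *\<^sub>R axis i 1) - pd i g x\<bar> \<le> e'" using dz' inball[OF t] by blast
          then show "norm (s * (pd i g (z0 + t *\<^sub>R axis i 1) - pd i g x)) \<le> e' * norm s"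
            by (simp add: abs_mult mult.commute[of "\<bar>s\<bar>"] mult_right_mono)
        qed
      qed auto
      then have step: "\<bar>g (z0 + h$i *\<^sub>R axis i 1) - g z0 - pd i g x * h$i\<bar> \<le> e' * \<bar>h$i\<bar>"
        by (simp add: \<psi>_def)
      have "\<bar>g (x + hv (insert i A)) - g x - (\<Sum>j\<in>insert i A. pd j g x * h$j)\<bar>
          = \<bar>(g (z0 + h$i *\<^sub>R axis i 1) - g z0 - pd i g x * h$i) + (g z0 - g x - (\<Sum>j\<in>A. pd j g x * h$j))\<bar>"
        using insert(1,2) by (simp add: hvi)
      also have "\<dots> \<le> e' * \<bar>h$i\<bar> + e' * (\<Sum>j\<in>A. \<bar>h$j\<bar>)"
        using step insert(3) unfolding z0_def by (smt (verit))
      also have "\<dots> = e' * (\<Sum>j\<in>insert i A. \<bar>h$j\<bar>)" using insert(1,2) by (simp add: algebra_simps)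
      finally show ?case .
    qed
    have hvU: "hv UNIV = h" by (simp add: hv_def vec_eq_iff)
    have "\<bar>g y - g x - (\<Sum>i\<in>UNIV. pd i g x * h$i)\<bar> \<le> e' * (\<Sum>i\<in>UNIV. \<bar>h$i\<bar>)"
      using tel[of UNIV] hvU by (simp add: h_def)
    also have "\<dots> \<le> e' * (\<Sum>i\<in>(UNIV::'n set). norm h)"
      using e' by (intro mult_left_mono sum_mono) (auto simp: component_le_norm_cart)
    also have "\<dots> = e * norm h" using N1 by (simp add: e'_def N_def)
    finally show "norm (g y - g x - (\<Sum>i\<in>UNIV. pd i g x * (y - x)$i)) \<le> e * norm (y - x)"
      by (simp add: h_def)
  qed
qed

lemma vec_has_derivative:
  fixes F :: "'a::real_normed_vector \<Rightarrow> real^'n::finite"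
  assumes "\<And>j. ((\<lambda>x. F x $ j) has_derivative (\<lambda>h. F' h $ j)) (at a)"
  shows "(F has_derivative F') (at a)"
proof -
  have "\<forall>i\<in>Basis. ((\<lambda>x. F x \<bullet> i) has_derivative (\<lambda>x. F' x \<bullet> i)) (at a)"
    using assms by (auto simp: Basis_vec_def cart_eq_inner_axis[symmetric])
  then show ?thesis using has_derivative_componentwise_within[of F F' a UNIV] by simp
qed

definition grad :: "(real^'n::finite \<Rightarrow> real) \<Rightarrow> real^'n \<Rightarrow> real^'n" where
  "grad u x = (\<chi> i. pd i u x)"

definition hessL :: "(real^'n::finite \<Rightarrow> real) \<Rightarrow> real^'n \<Rightarrow> real^'n \<Rightarrow> real^'n" where
  "hessL u x h = (\<chi> j. \<Sum>i\<in>UNIV. pd i (pd j u) x * h$i)"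

lemma C2_derivs:
  fixes u :: "real^'n::finite \<Rightarrow> real"
  assumes S: "open S" and C2: "Ck_on 2 S u" and x: "x \<in> S"
  shows "(u has_derivative (\<lambda>h. grad u x \<bullet> h)) (at x)"
    and "(grad u has_derivative hessL u x) (at x)"
    and "det (matrix (hessL u x)) = det (hessian u x)"
proof -
  have c: "continuous_on S (iter_pd is u)" if "length is \<le> 2" for "is"
    using C2 that by (simp add: Ck_on_def)
  have d: "(\<lambda>t. iter_pd is u (y + t *\<^sub>R axis i 1)) differentiable (at 0)" if "length is < 2" "y \<in> S" for "is" i y
    using C2 that by (simp add: Ck_on_def)
  have "(u has_derivative (\<lambda>h. \<Sum>i\<in>UNIV. pd i u x * h$i)) (at x)"
  proof (rule partials_has_derivative[OF S x])
    show "\<And>y i. y \<in> S \<Longrightarrow> (\<lambda>t. u (y + t *\<^sub>R axis i 1)) differentiable (at 0)"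
      using d[of "[]"] by simp
    show "\<And>i. continuous_on S (pd i u)" using c[of "[i]" for i] by simp
  qed
  then show "(u has_derivative (\<lambda>h. grad u x \<bullet> h)) (at x)"
    by (simp add: grad_def inner_vec_def mult.commute)
  show "(grad u has_derivative hessL u x) (at x)"
  proof (rule vec_has_derivative)
    fix j
    have "(pd j u has_derivative (\<lambda>h. \<Sum>i\<in>UNIV. pd i (pd j u) x * h$i)) (at x)"
    proof (rule partials_has_derivative[OF S x])
      show "\<And>y i. y \<in> S \<Longrightarrow> (\<lambda>t. pd j u (y + t *\<^sub>R axis i 1)) differentiable (at 0)"
        using d[of "[j]"] by simp
      show "\<And>i. continuous_on S (pd i (pd j u))" using c[of "[i, j]" for i] by simp
    qed
    then show "((\<lambda>x. grad u x $ j) has_derivative (\<lambda>h. hessL u x h $ j)) (at x)"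
      by (simp add: grad_def hessL_def)
  qed
  have "matrix (hessL u x) = transpose (hessian u x)"
    by (simp add: matrix_def hessL_def hessian_def transpose_def vec_eq_iff axis_def
        if_distrib cong: if_cong)
  then show "det (matrix (hessL u x)) = det (hessian u x)" by simp
qed

definition P1 :: "('n::finite + 'k::finite \<Rightarrow> 'm::finite) \<Rightarrow> real^'m \<Rightarrow> real^'n" where
  "P1 b h = (\<chi> i. h $ b (Inl i))"
definition P2 :: "('n::finite + 'k::finite \<Rightarrow> 'm::finite) \<Rightarrow> real^'m \<Rightarrow> real^'k" where
  "P2 b h = (\<chi> j. h $ b (Inr j))"
definition J :: "('n::finite + 'k::finite \<Rightarrow> 'm::finite) \<Rightarrow> real^'n \<Rightarrow> real^'k \<Rightarrow> real^'m" where
  "J b x y = (\<chi> m. case inv b m of Inl i \<Rightarrow> x$i | Inr j \<Rightarrow> y$j)"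

lemma PJ:
  assumes "bij b"
  shows "P1 b (J b x y) = x" "P2 b (J b x y) = y" "J b (P1 b h) (P2 b h) = h"
  using assms
  by (auto simp: P1_def P2_def J_def vec_eq_iff bij_def inv_f_f f_inv_into_f split: sum.splits)
     (metis assms bij_inv_eq_iff)+

lemma J_nth_Inl: "bij b \<Longrightarrow> J b x y $ b (Inl i) = x $ i"
  by (simp add: J_def bij_def inv_f_f)
lemma J_nth_Inr: "bij b \<Longrightarrow> J b x y $ b (Inr i) = y $ i"
  by (simp add: J_def bij_def inv_f_f)

lemma linear_P1: "linear (P1 b)" by (auto intro!: linearI simp: P1_def vec_eq_iff)
lemma linear_P2: "linear (P2 b)" by (auto intro!: linearI simp: P2_def vec_eq_iff)
lemma linear_J: "linear f \<Longrightarrow> linear g \<Longrightarrow> linear (\<lambda>h. J b (f h) (g h))"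
  by (auto intro!: linearI simp: J_def vec_eq_iff linear_add linear_scale split: sum.splits)

lemma det_zero_comp:
  fixes f :: "real^'m::finite \<Rightarrow> real^'m"
  assumes "linear f" "\<And>x. f x $ i = 0"
  shows "det (matrix f) = 0"
proof -
  have "row i (matrix f) = 0" using assms by (simp add: row_def matrix_def vec_eq_iff)
  then show ?thesis by (rule det_zero_row)
qed

lemma det_diag_map:
  "det (matrix (\<lambda>x::real^'m::finite. \<chi> i. c i * x$i)) = prod c UNIV"
  by (subst det_diagonal) (auto simp: matrix_def axis_def)

lemma det_swap_map:
  fixes a c :: "'m::finite"
  assumes "a \<noteq> c"
  shows "det (matrix (\<lambda>x::real^'m. \<chi> i. x $ Transposition.transpose a c i)) = -1"
proof -
  have "matrix (\<lambda>x::real^'m. \<chi> i. x $ Transposition.transpose a c i) = (\<chi> i. (mat 1 :: real^'m^'m) $ Transposition.transpose a c i)"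
    by (simp add: matrix_def mat_def axis_def vec_eq_iff)
  also have "det \<dots> = of_int (sign (Transposition.transpose a c)) * det (mat 1 :: real^'m^'m)"
    by (rule det_permute_rows, rule permutes_swap_id) auto
  finally show ?thesis using assms by (simp add: sign_swap_id)
qed

lemma det_idplus_map:
  fixes m n :: "'m::finite"
  assumes "m \<noteq> n"
  shows "det (matrix (\<lambda>x::real^'m. \<chi> i. if i = m then x$m + x$n else x$i)) = 1"
proof -
  have "(\<lambda>x::real^'m. \<chi> i. if i = m then x$m + x$n else x$i) = (\<lambda>w. w + (w$n) *\<^sub>R axis m 1)"
    by (auto simp: vec_eq_iff axis_def)
  moreover have "det (matrix (\<lambda>w::real^'m. w + (w$n) *\<^sub>R axis m 1)) = 1"
  proof -
    define M where "M = matrix (\<lambda>w::real^'m. w + (w$n) *\<^sub>R axis m 1)"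
    have T: "transpose M = (\<chi> r. if r = n then row n (mat 1) + axis m 1 else row r (mat 1))"
      using assms by (auto simp: M_def transpose_def matrix_def row_def vec_eq_iff mat_def axis_def)
    have "axis m 1 \<in> vec.span {row j (mat 1 :: real^'m^'m) |j. j \<noteq> n}"
      using assms by (intro vec.span_base) (auto simp: row_def mat_def axis_def vec_eq_iff intro!: exI[of _ m])
    then have "det (transpose M) = 1"
      unfolding T by (subst det_row_span) auto
    then show ?thesis by (simp add: M_def)
  qed
  ultimately show ?thesis by simp
qed

lemma block_left:
  fixes b :: "'n::finite + 'k::finite \<Rightarrow> 'm::finite" and L :: "real^'n \<Rightarrow> real^'n"
  assumes b: "bij b" and L: "linear L"
  shows "det (matrix (\<lambda>h. J b (L (P1 b h)) (P2 b h))) = det (matrix L)"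
proof (rule induct_linear_elementary[OF L, where P = "\<lambda>L. det (matrix (\<lambda>h. J b (L (P1 b h)) (P2 b h))) = det (matrix L)"])
  fix f g :: "real^'n \<Rightarrow> real^'n"
  assume comp: "linear f" "linear g" "det (matrix (\<lambda>h. J b (f (P1 b h)) (P2 b h))) = det (matrix f)"
     "det (matrix (\<lambda>h. J b (g (P1 b h)) (P2 b h))) = det (matrix g)"
  have lf: "linear (\<lambda>h. J b (f (P1 b h)) (P2 b h))"
    by (intro linear_J linear_compose[OF linear_P1 comp(1), unfolded o_def] linear_P2)
  have lg: "linear (\<lambda>h. J b (g (P1 b h)) (P2 b h))"
    by (intro linear_J linear_compose[OF linear_P1 comp(2), unfolded o_def] linear_P2)
  have "(\<lambda>h. J b ((f \<circ> g) (P1 b h)) (P2 b h)) = (\<lambda>h. J b (f (P1 b h)) (P2 b h)) \<circ> (\<lambda>h. J b (g (P1 b h)) (P2 b h))"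
    using b by (simp add: o_def PJ)
  then show "det (matrix (\<lambda>h. J b ((f \<circ> g) (P1 b h)) (P2 b h))) = det (matrix (f \<circ> g))"
    using comp by (simp add: matrix_compose[OF lg lf] det_mul matrix_compose[OF comp(2) comp(1)])
next
  fix f :: "real^'n \<Rightarrow> real^'n" and i
  assume zeroes: "linear f" "\<And>x. f x $ i = 0"
  have lf: "linear (\<lambda>h. J b (f (P1 b h)) (P2 b h))"
    by (intro linear_J linear_compose[OF linear_P1 zeroes(1), unfolded o_def] linear_P2)
  have "det (matrix (\<lambda>h. J b (f (P1 b h)) (P2 b h))) = 0"
    by (rule det_zero_comp[OF lf, of "b (Inl i)"]) (simp add: J_nth_Inl[OF b] zeroes(2))
  moreover have "det (matrix f) = 0" by (rule det_zero_comp[OF zeroes(1) zeroes(2)])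
  ultimately show "det (matrix (\<lambda>h. J b (f (P1 b h)) (P2 b h))) = det (matrix f)" by simp
next
  fix c :: "'n \<Rightarrow> real"
  define c' where "c' = (\<lambda>m. case inv b m of Inl i \<Rightarrow> c i | Inr j \<Rightarrow> 1)"
  have "(\<lambda>h. J b ((\<lambda>x. \<chi> i. c i * x $ i) (P1 b h)) (P2 b h)) = (\<lambda>h. \<chi> m. c' m * h $ m)"
  proof (intro ext iffI, simp only: vec_eq_iff, intro allI)
    fix h k
    show "J b ((\<lambda>x. \<chi> i. c i * x $ i) (P1 b h)) (P2 b h) $ k = (\<chi> m. c' m * h $ m) $ k"
    proof (cases "inv b k")
      case (Inl i)
      then have k: "k = b (Inl i)" using b by (metis bij_inv_eq_iff)
      show ?thesis using b by (simp add: k J_nth_Inl[OF b] P1_def c'_def bij_def inv_f_f)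
    next
      case (Inr j)
      then have k: "k = b (Inr j)" using b by (metis bij_inv_eq_iff)
      show ?thesis using b by (simp add: k J_nth_Inr[OF b] P2_def c'_def bij_def inv_f_f)
    qed
  qed
  then have "det (matrix (\<lambda>h. J b ((\<lambda>x. \<chi> i. c i * x $ i) (P1 b h)) (P2 b h))) = prod c' UNIV"
    by (simp add: det_diag_map)
  also have "prod c' UNIV = prod (c' \<circ> b) UNIV"
    using b by (simp add: prod.reindex_bij_betw[symmetric] bij_betw_def bij_def o_def)
  also have "\<dots> = prod (c' \<circ> b \<circ> Inl) UNIV * prod (c' \<circ> b \<circ> Inr) UNIV"
    by (simp flip: UNIV_Plus_UNIV add: prod.Plus)
  also have "\<dots> = prod c UNIV"
    using b by (simp add: c'_def o_def bij_def inv_f_f)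
  finally show "det (matrix (\<lambda>h. J b ((\<lambda>x. \<chi> i. c i * x $ i) (P1 b h)) (P2 b h))) = det (matrix (\<lambda>x. \<chi> i. c i * x $ i))" by (simp add: det_diag_map)
next
  fix m n :: 'n
  assume swap: "m \<noteq> n"
  have bm: "b (Inl m) \<noteq> b (Inl n)" using swap b by (simp add: bij_def inj_eq)
  have "(\<lambda>h. J b ((\<lambda>x. \<chi> i. x $ Transposition.transpose m n i) (P1 b h)) (P2 b h))
        = (\<lambda>h. \<chi> k. h $ Transposition.transpose (b (Inl m)) (b (Inl n)) k)"
  proof (intro ext iffI, simp only: vec_eq_iff, intro allI)
    fix h k
    show "J b ((\<lambda>x. \<chi> i. x $ Transposition.transpose m n i) (P1 b h)) (P2 b h) $ k
        = (\<chi> k. h $ Transposition.transpose (b (Inl m)) (b (Inl n)) k) $ k"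
    proof (cases "inv b k")
      case (Inl i)
      then have k: "k = b (Inl i)" using b by (metis bij_inv_eq_iff)
      have "Transposition.transpose (b (Inl m)) (b (Inl n)) (b (Inl i)) = b (Inl (Transposition.transpose m n i))"
        using b by (auto simp: Transposition.transpose_def bij_def inj_eq)
      then show ?thesis by (simp add: k J_nth_Inl[OF b] P1_def)
    next
      case (Inr j)
      then have k: "k = b (Inr j)" using b by (metis bij_inv_eq_iff)
      have "Transposition.transpose (b (Inl m)) (b (Inl n)) (b (Inr j)) = b (Inr j)"
        using b by (auto simp: Transposition.transpose_def bij_def inj_eq)
      then show ?thesis by (simp add: k J_nth_Inr[OF b] P2_def)
    qed
  qed
  then show "det (matrix (\<lambda>h. J b ((\<lambda>x. \<chi> i. x $ Transposition.transpose m n i) (P1 b h)) (P2 b h))) = det (matrix (\<lambda>x. \<chi> i. x $ Transposition.transpose m n i))"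
    using det_swap_map[OF swap] det_swap_map[OF bm] by simp
next
  fix m n :: 'n
  assume idplus: "m \<noteq> n"
  have bm: "b (Inl m) \<noteq> b (Inl n)" using idplus b by (simp add: bij_def inj_eq)
  have "(\<lambda>h. J b ((\<lambda>x. \<chi> i. if i = m then x $ m + x $ n else x $ i) (P1 b h)) (P2 b h))
        = (\<lambda>h. \<chi> k. if k = b (Inl m) then h $ b (Inl m) + h $ b (Inl n) else h $ k)"
  proof (intro ext iffI, simp only: vec_eq_iff, intro allI)
    fix h k
    show "J b ((\<lambda>x. \<chi> i. if i = m then x $ m + x $ n else x $ i) (P1 b h)) (P2 b h) $ k
        = (\<chi> k. if k = b (Inl m) then h $ b (Inl m) + h $ b (Inl n) else h $ k) $ k"
    proof (cases "inv b k")
      case (Inl i)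
      then have k: "k = b (Inl i)" using b by (metis bij_inv_eq_iff)
      show ?thesis using b by (auto simp: k J_nth_Inl[OF b] P1_def bij_def inj_eq)
    next
      case (Inr j)
      then have k: "k = b (Inr j)" using b by (metis bij_inv_eq_iff)
      show ?thesis using b by (auto simp: k J_nth_Inr[OF b] P2_def bij_def inj_eq)
    qed
  qed
  then show "det (matrix (\<lambda>h. J b ((\<lambda>x. \<chi> i. if i = m then x $ m + x $ n else x $ i) (P1 b h)) (P2 b h))) = det (matrix (\<lambda>x. \<chi> i. if i = m then x $ m + x $ n else x $ i))"
    using det_idplus_map[OF idplus] det_idplus_map[OF bm] by simp
qed

lemma block_right:
  fixes b :: "'n::finite + 'k::finite \<Rightarrow> 'm::finite" and L :: "real^'k \<Rightarrow> real^'k"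
  assumes b: "bij b" and L: "linear L"
  shows "det (matrix (\<lambda>h. J b (P1 b h) (L (P2 b h)))) = det (matrix L)"
proof -
  define b' where "b' = b \<circ> case_sum Inr Inl"
  have sw: "bij (case_sum Inr Inl :: 'k + 'n \<Rightarrow> 'n + 'k)"
    unfolding bij_def inj_def surj_def by (auto split: sum.splits) (metis sum.case(1) sum.case(2) sum.exhaust)
  have b': "bij b'" unfolding b'_def by (rule bij_comp[OF sw b])
  have p1: "P1 b' h = P2 b h" for h by (simp add: P1_def P2_def b'_def)
  have p2: "P2 b' h = P1 b h" for h by (simp add: P1_def P2_def b'_def)
  have jj: "J b' y x = J b x y" for x y
  proof (simp only: vec_eq_iff, intro allI)
    fix m
    show "J b' y x $ m = J b x y $ m"
    proof (cases "inv b m")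
      case (Inl i)
      then have k: "m = b (Inl i)" using b by (metis bij_inv_eq_iff)
      have "m = b' (Inr i)" by (simp add: k b'_def)
      then show ?thesis using J_nth_Inr[OF b', of y x i] J_nth_Inl[OF b, of x y i] k by simp
    next
      case (Inr j)
      then have k: "m = b (Inr j)" using b by (metis bij_inv_eq_iff)
      have "m = b' (Inl j)" by (simp add: k b'_def)
      then show ?thesis using J_nth_Inl[OF b', of y x j] J_nth_Inr[OF b, of x y j] k by simp
    qed
  qed
  have "(\<lambda>h. J b (P1 b h) (L (P2 b h))) = (\<lambda>h. J b' (L (P1 b' h)) (P2 b' h))"
    by (simp add: p1 p2 jj)
  then show ?thesis using block_left[OF b' L] by simp
qed

lemma block_det:
  fixes b :: "'n::finite + 'k::finite \<Rightarrow> 'm::finite" and L1 :: "real^'n \<Rightarrow> real^'n" and L2 :: "real^'k \<Rightarrow> real^'k"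
  assumes b: "bij b" and L1: "linear L1" and L2: "linear L2"
  shows "det (matrix (\<lambda>h. J b (L1 (P1 b h)) (L2 (P2 b h)))) = det (matrix L1) * det (matrix L2)"
proof -
  have lf: "linear (\<lambda>h. J b (L1 (P1 b h)) (P2 b h))"
    by (intro linear_J linear_compose[OF linear_P1 L1, unfolded o_def] linear_P2)
  have lg: "linear (\<lambda>h. J b (P1 b h) (L2 (P2 b h)))"
    by (intro linear_J linear_compose[OF linear_P2 L2, unfolded o_def] linear_P1)
  have "(\<lambda>h. J b (L1 (P1 b h)) (L2 (P2 b h))) = (\<lambda>h. J b (L1 (P1 b h)) (P2 b h)) \<circ> (\<lambda>h. J b (P1 b h) (L2 (P2 b h)))"
    using b by (simp add: o_def PJ)
  then show ?thesis
    by (simp add: matrix_compose[OF lg lf] det_mul block_left[OF b L1] block_right[OF b L2])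
qed

lemma u_lower:
  fixes u :: "real^'n::finite \<Rightarrow> real"
  assumes S: "open S" "bounded S" "convex S" "S \<noteq> {}" and cvx: "convex_on S u"
  and du: "\<And>x. x \<in> S \<Longrightarrow> (u has_derivative (\<lambda>h. g x \<bullet> h)) (at x)"
  shows "\<exists>L\<ge>0. \<forall>x\<in>S. u x \<ge> - L"
proof -
  obtain x0 where x0: "x0 \<in> S" using S(4) by blast
  define D where "D = diameter S"
  have Dd: "\<And>x y. x\<in>S \<Longrightarrow> y\<in>S \<Longrightarrow> norm (x - y) \<le> D"
    using diameter_bounded_bound[OF S(2)] by (fastforce simp: D_def dist_norm)
  have D0: "D \<ge> 0" using diameter_ge_0[OF S(2)] by (simp add: D_def)
  define L where "L = \<bar>u x0\<bar> + norm (g x0) * D"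
  have "u z \<ge> - L" if z: "z \<in> S" for z
  proof -
    have "u x0 + g x0 \<bullet> (z - x0) \<le> u z" using tangent_ineq[OF S(1) S(3) cvx du[OF x0] x0 z] by simp
    moreover have "\<bar>g x0 \<bullet> (z - x0)\<bar> \<le> norm (g x0) * D"
      using Cauchy_Schwarz_ineq2[of "g x0" "z - x0"] Dd[OF z x0]
      by (meson mult_left_mono norm_ge_zero order_trans)
    ultimately show ?thesis by (simp add: L_def)
  qed
  moreover have "L \<ge> 0" using D0 by (simp add: L_def)
  ultimately show ?thesis by blast
qed

lemma u_closed:
  fixes u :: "real^'n::finite \<Rightarrow> real"
  assumes S: "open S" and cont: "continuous_on S u"
  and blow: "\<forall>z\<in>frontier S. filterlim u at_top (at z within S)"
  shows "closed {x\<in>S. u x \<le> c}"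
proof -
  have "closure {x\<in>S. u x \<le> c} \<subseteq> {x\<in>S. u x \<le> c}"
  proof
    fix y assume y: "y \<in> closure {x\<in>S. u x \<le> c}"
    then obtain xs where xs: "\<And>k. xs k \<in> {x\<in>S. u x \<le> c}" and lim: "xs \<longlonglongrightarrow> y"
      unfolding closure_sequential by blast
    have yc: "y \<in> closure S" using y closure_mono[of "{x\<in>S. u x \<le> c}" S] by blast
    show "y \<in> {x\<in>S. u x \<le> c}"
    proof (cases "y \<in> S")
      case True
      have "(u \<longlongrightarrow> u y) (at y within S)" using cont True by (simp add: continuous_on_def)
      then have "(u \<longlongrightarrow> u y) (at y)" using at_within_open[OF True S] by simp
      then have "isCont u y" by (simp add: isCont_def)
      then have "((\<lambda>k. u (xs k)) \<longlonglongrightarrow> u y)"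
        using lim by (rule isCont_tendsto_compose)
      then have "u y \<le> c" using xs by (intro LIMSEQ_le_const2) auto
      then show ?thesis using True by simp
    next
      case False
      then have fr: "y \<in> frontier S" using yc S by (simp add: frontier_def interior_open)
      have "filterlim xs (at y within S) sequentially"
        unfolding filterlim_at using xs lim False by (auto intro!: always_eventually)
      from filterlim_compose[OF blow[rule_format, OF fr] this]
      have "filterlim (\<lambda>k. u (xs k)) at_top sequentially" by (simp add: o_def)
      then have "eventually (\<lambda>k. u (xs k) > c) sequentially" by (simp add: filterlim_at_top_dense)
      then obtain k where "u (xs k) > c" by (auto simp: eventually_sequentially)
      then show ?thesis using xs[of k] by simp
    qed
  qed
  then show ?thesis using closure_subset_eq by blast
qed

lemma u_unbounded:
  fixes u :: "real^'n::finite \<Rightarrow> real"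
  assumes S: "open S" "bounded S" "S \<noteq> {}"
  and blow: "\<forall>z\<in>frontier S. filterlim u at_top (at z within S)"
  shows "\<not> bdd_above (u ` S)"
proof
  assume bd: "bdd_above (u ` S)"
  then obtain M where M: "\<And>x. x \<in> S \<Longrightarrow> u x \<le> M" by (auto simp: bdd_above_def)
  have "S \<noteq> UNIV" using S(2) by auto
  then obtain z where z: "z \<in> frontier S" using frontier_not_empty[OF S(3)] by blast
  have zS: "z \<notin> S" using z S(1) by (simp add: frontier_def interior_open)
  have "z islimpt S" using z zS by (auto simp: frontier_def islimpt_in_closure)
  then have nt: "at z within S \<noteq> bot" using trivial_limit_within by blast
  have "eventually (\<lambda>x. u x > M) (at z within S)"
    using blow z by (simp add: filterlim_at_top_dense)
  moreover have "eventually (\<lambda>x. x \<in> S) (at z within S)" by (simp add: eventually_at_filter)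
  ultimately have "eventually (\<lambda>x. False) (at z within S)"
    by eventually_elim (use M in force)
  then show False using nt by (simp add: eventually_False)
qed

lemma growth_bound:
  fixes f :: "real \<Rightarrow> real" and n :: nat
  assumes f_bdd: "\<And>t. bdd_above (f ` {..t})"
    and f_growth: "Limsup at_top (\<lambda>s::real. ereal (f s / s ^ n)) < \<infinity>"
  shows "\<exists>A B. A \<ge> 0 \<and> B \<ge> 0 \<and> (\<forall>s. f s \<le> A + B * (max s 0) ^ n)"
proof -
  obtain m :: nat where m: "Limsup at_top (\<lambda>s::real. ereal (f s / s ^ n)) < ereal (real m)"
    using f_growth less_PInf_Ex_of_nat by auto
  define B0 where "B0 = real m"
  have "eventually (\<lambda>s. ereal (f s / s ^ n) < ereal B0) at_top"
    using Limsup_lessD[OF m] by (simp add: B0_def)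
  then obtain s0 where s0: "\<And>s. s \<ge> s0 \<Longrightarrow> f s / s ^ n < B0"
    by (auto simp: eventually_at_top_linorder)
  define s1 where "s1 = max s0 1"
  obtain A0 where A0: "\<And>s. s \<le> s1 \<Longrightarrow> f s \<le> A0"
    using f_bdd[of s1] by (auto simp: bdd_above_def)
  define A where "A = max A0 0"
  define B where "B = max B0 0"
  have "f s \<le> A + B * (max s 0) ^ n" for s
  proof (cases "s \<le> s1")
    case True
    have "0 \<le> B * (max s 0) ^ n" by (simp add: B_def)
    then show ?thesis using A0[OF True] by (simp add: A_def)
  next
    case False
    then have sp: "s > 0" "s \<ge> s0" by (auto simp: s1_def)
    have "f s / s ^ n < B0" using s0 sp by simp
    then have "f s < B0 * s ^ n" using sp by (simp add: divide_less_eq)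
    also have "\<dots> \<le> B * s ^ n" using sp by (intro mult_right_mono) (auto simp: B_def)
    finally show ?thesis using sp by (simp add: A_def max_def)
  qed
  moreover have "A \<ge> 0" "B \<ge> 0" by (auto simp: A_def B_def)
  ultimately show ?thesis by blast
qed

lemma inner_J:
  fixes b :: "'n::finite + 'k::finite \<Rightarrow> 'm::finite"
  assumes b: "bij b"
  shows "J b x y \<bullet> h = x \<bullet> P1 b h + y \<bullet> P2 b h"
proof -
  have "J b x y \<bullet> h = (\<Sum>m\<in>UNIV. J b x y $ m * h $ m)" by (simp add: inner_vec_def)
  also have "\<dots> = (\<Sum>s\<in>UNIV. J b x y $ b s * h $ b s)"
    using b by (simp add: sum.reindex_bij_betw[symmetric, of b UNIV UNIV] bij_betw_def bij_def)
  also have "\<dots> = (\<Sum>i\<in>UNIV. J b x y $ b (Inl i) * h $ b (Inl i)) + (\<Sum>j\<in>UNIV. J b x y $ b (Inr j) * h $ b (Inr j))"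
    by (simp flip: UNIV_Plus_UNIV add: sum.Plus)
  also have "\<dots> = x \<bullet> P1 b h + y \<bullet> P2 b h"
    by (simp add: J_nth_Inl[OF b] J_nth_Inr[OF b] inner_vec_def P1_def P2_def)
  finally show ?thesis .
qed

lemma J_split:
  fixes b :: "'n::finite + 'k::finite \<Rightarrow> 'm::finite"
  shows "J b x y = J b x 0 + J b 0 y"
  by (auto simp: J_def vec_eq_iff split: sum.splits)

lemma linear_Jl: "linear (\<lambda>x. J b x 0)" by (auto intro!: linearI simp: J_def vec_eq_iff split: sum.splits)
lemma linear_Jr: "linear (\<lambda>y. J b 0 y)" by (auto intro!: linearI simp: J_def vec_eq_iff split: sum.splits)

lemma cont_lin: "linear (f::real^'a::finite \<Rightarrow> real^'b::finite) \<Longrightarrow> continuous (at x) f"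
  by (simp add: linear_conv_bounded_linear linear_continuous_at)

theorem theorem1p2:
  fixes f :: "real \<Rightarrow> real"
  assumes n2: "CARD('n::finite) \<ge> 2"
    and f_cont: "continuous_on UNIV f"
    and f_nonneg: "\<And>s. f s \<ge> 0"
    and f_bdd: "\<And>t. bdd_above (f ` {..t})"
    and f_unbdd: "\<not> bdd_above (f ` {0..})"
    and f_growth: "Limsup at_top (\<lambda>s::real. ereal (f s / s ^ CARD('n))) < \<infinity>"
    and \<Omega>_bdd: "bounded (\<Omega> :: (real^'n) set)"
    and \<Omega>_smooth: "smooth_domain \<Omega>"
    and \<Omega>_convex: "convex \<Omega>"
  shows "\<not> (\<exists>u :: real^'n \<Rightarrow> real.
              convex_on \<Omega> u \<and> Ck_on 2 \<Omega> u \<and>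
              (\<forall>x\<in>\<Omega>. det (hessian u x) = f (u x)) \<and>
              (\<forall>z\<in>frontier \<Omega>. filterlim u at_top (at z within \<Omega>)))"
proof
  assume "\<exists>u :: real^'n \<Rightarrow> real.
              convex_on \<Omega> u \<and> Ck_on 2 \<Omega> u \<and>
              (\<forall>x\<in>\<Omega>. det (hessian u x) = f (u x)) \<and>
              (\<forall>z\<in>frontier \<Omega>. filterlim u at_top (at z within \<Omega>))"
  then obtain u :: "real^'n \<Rightarrow> real" where cvx: "convex_on \<Omega> u" and C2: "Ck_on 2 \<Omega> u"
    and eq: "\<forall>x\<in>\<Omega>. det (hessian u x) = f (u x)"
    and blow: "\<forall>z\<in>frontier \<Omega>. filterlim u at_top (at z within \<Omega>)" by blast
  have \<Omega>o: "open \<Omega>" and \<Omega>ne: "\<Omega> \<noteq> {}" using \<Omega>_smooth by (auto simp: smooth_domain_def)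
  note du = C2_derivs(1)[OF \<Omega>o C2] and dg = C2_derivs(2)[OF \<Omega>o C2]
  have dh: "det (matrix (hessL u x)) = f (u x)" if "x \<in> \<Omega>" for x
    using C2_derivs(3)[OF \<Omega>o C2 that] eq that by simp
  have linH: "linear (hessL u x)" if "x \<in> \<Omega>" for x
    using has_derivative_linear[OF dg[OF that]] .
  have contu: "continuous_on \<Omega> u"
    using du by (meson continuous_at_imp_continuous_on has_derivative_continuous)
  obtain Lu where Lu0: "Lu \<ge> 0" and Lu: "\<And>x. x \<in> \<Omega> \<Longrightarrow> u x \<ge> - Lu"
    using u_lower[OF \<Omega>o \<Omega>_bdd \<Omega>_convex \<Omega>ne cvx du] by blast
  obtain A B where A: "A \<ge> 0" and B: "B \<ge> 0" and fAB: "\<And>s. f s \<le> A + B * (max s 0) ^ CARD('n)"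
    using growth_bound[OF f_bdd f_growth] by blast
  define n where "n = CARD('n)"
  define C0 where "C0 = A + B * (1 + Lu) ^ n"
  have C00: "C0 \<ge> 0" using A B Lu0 by (simp add: C0_def)
  have "card (UNIV :: ('n + 'n) set) = card (UNIV :: 'n bit0 set)"
    by (simp add: card_UNIV_sum)
  then obtain b :: "'n + 'n \<Rightarrow> 'n bit0" where b: "bij b"
    using finite_same_card_bij[of "UNIV :: ('n + 'n) set" "UNIV :: 'n bit0 set"] by (auto simp: bij_def bij_betw_def)
  define P where "P = {z. P1 b z \<in> \<Omega> \<and> P2 b z \<in> \<Omega>}"
  define W where "W = (\<lambda>z. u (P1 b z) + u (P2 b z))"
  define G where "G = (\<lambda>z. J b (grad u (P1 b z)) (grad u (P2 b z)))"
  define G' where "G' = (\<lambda>z h. J b (hessL u (P1 b z) (P1 b h)) (hessL u (P2 b z) (P2 b h)))"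
  have Pint: "P = P1 b -` \<Omega> \<inter> P2 b -` \<Omega>" by (auto simp: P_def)
  have Popen: "open P" unfolding Pint
    by (intro open_Int continuous_open_vimage \<Omega>o cont_lin linear_P1 linear_P2)
  have Pbdd: "bounded P"
  proof -
    obtain R where R: "\<And>x. x \<in> \<Omega> \<Longrightarrow> norm x \<le> R" using \<Omega>_bdd by (auto simp: bounded_iff)
    have "norm z \<le> CARD('n bit0) * R" if z: "z \<in> P" for z
    proof -
      have comp: "\<bar>z $ m\<bar> \<le> R" for m
      proof (cases "inv b m")
        case (Inl i)
        then have "m = b (Inl i)" using b by (metis bij_inv_eq_iff)
        then have "z $ m = P1 b z $ i" by (simp add: P1_def)
        then show ?thesis using component_le_norm_cart[of "P1 b z" i] R[of "P1 b z"] z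
          by (auto simp: P_def)
      next
        case (Inr i)
        then have "m = b (Inr i)" using b by (metis bij_inv_eq_iff)
        then have "z $ m = P2 b z $ i" by (simp add: P2_def)
        then show ?thesis using component_le_norm_cart[of "P2 b z" i] R[of "P2 b z"] z
          by (auto simp: P_def)
      qed
      have "norm z \<le> (\<Sum>m\<in>UNIV. \<bar>z $ m\<bar>)" by (rule norm_le_l1_cart)
      also have "\<dots> \<le> (\<Sum>m\<in>(UNIV::'n bit0 set). R)" by (intro sum_mono comp)
      finally show ?thesis by simp
    qed
    then show ?thesis by (auto simp: bounded_iff)
  qed
  have Pconv: "convex P" unfolding Pint
    by (intro convex_Int convex_linear_vimage linear_P1 linear_P2 \<Omega>_convex)
  obtain x0 where x0: "x0 \<in> \<Omega>" using \<Omega>ne by blast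
  have Pne: "P \<noteq> {}" using x0 b by (auto simp: P_def PJ intro!: exI[of _ "J b x0 x0"])
  have Wcvx: "convex_on P W"
  proof (rule convex_onI[OF _ Pconv])
    fix t :: real and x y assume t: "t > 0" "t < 1" and x: "x \<in> P" and y: "y \<in> P"
    have l1: "P1 b ((1 - t) *\<^sub>R x + t *\<^sub>R y) = (1 - t) *\<^sub>R P1 b x + t *\<^sub>R P1 b y"
      using linear_P1[of b] by (simp add: linear_add linear_scale)
    have l2: "P2 b ((1 - t) *\<^sub>R x + t *\<^sub>R y) = (1 - t) *\<^sub>R P2 b x + t *\<^sub>R P2 b y"
      using linear_P2[of b] by (simp add: linear_add linear_scale)
    have "u ((1 - t) *\<^sub>R P1 b x + t *\<^sub>R P1 b y) \<le> (1 - t) * u (P1 b x) + t * u (P1 b y)"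
      using x y t by (intro convex_onD[OF cvx]) (auto simp: P_def)
    moreover have "u ((1 - t) *\<^sub>R P2 b x + t *\<^sub>R P2 b y) \<le> (1 - t) * u (P2 b x) + t * u (P2 b y)"
      using x y t by (intro convex_onD[OF cvx]) (auto simp: P_def)
    ultimately show "W ((1 - t) *\<^sub>R x + t *\<^sub>R y) \<le> (1 - t) * W x + t * W y"
      unfolding W_def l1 l2 by (simp add: algebra_simps)
  qed
  have dW: "(W has_derivative (\<lambda>h. G z \<bullet> h)) (at z)" if z: "z \<in> P" for z
  proof -
    have z1: "P1 b z \<in> \<Omega>" and z2: "P2 b z \<in> \<Omega>" using z by (auto simp: P_def)
    have a1: "((\<lambda>z. u (P1 b z)) has_derivative (\<lambda>h. grad u (P1 b z) \<bullet> P1 b h)) (at z)"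
      using has_derivative_compose[OF linear_imp_has_derivative[OF linear_P1] du[OF z1]] by (simp add: o_def)
    have a2: "((\<lambda>z. u (P2 b z)) has_derivative (\<lambda>h. grad u (P2 b z) \<bullet> P2 b h)) (at z)"
      using has_derivative_compose[OF linear_imp_has_derivative[OF linear_P2] du[OF z2]] by (simp add: o_def)
    show ?thesis using has_derivative_add[OF a1 a2] by (simp add: W_def G_def inner_J[OF b])
  qed
  have dG: "(G has_derivative G' z) (at z)" if z: "z \<in> P" for z
  proof -
    have z1: "P1 b z \<in> \<Omega>" and z2: "P2 b z \<in> \<Omega>" using z by (auto simp: P_def)
    have g1: "((\<lambda>z. grad u (P1 b z)) has_derivative (\<lambda>h. hessL u (P1 b z) (P1 b h))) (at z)"
      using has_derivative_compose[OF linear_imp_has_derivative[OF linear_P1] dg[OF z1]] by (simp add: o_def)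
    have g2: "((\<lambda>z. grad u (P2 b z)) has_derivative (\<lambda>h. hessL u (P2 b z) (P2 b h))) (at z)"
      using has_derivative_compose[OF linear_imp_has_derivative[OF linear_P2] dg[OF z2]] by (simp add: o_def)
    have a1: "((\<lambda>z. J b (grad u (P1 b z)) 0) has_derivative (\<lambda>h. J b (hessL u (P1 b z) (P1 b h)) 0)) (at z)"
      using has_derivative_compose[OF g1 linear_imp_has_derivative[OF linear_Jl[of b]]] by (simp add: o_def)
    have a2: "((\<lambda>z. J b 0 (grad u (P2 b z))) has_derivative (\<lambda>h. J b 0 (hessL u (P2 b z) (P2 b h)))) (at z)"
      using has_derivative_compose[OF g2 linear_imp_has_derivative[OF linear_Jr[of b]]] by (simp add: o_def)
    have "G = (\<lambda>z. J b (grad u (P1 b z)) 0 + J b 0 (grad u (P2 b z)))"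
      by (simp add: G_def J_split[symmetric])
    moreover have "G' z = (\<lambda>h. J b (hessL u (P1 b z) (P1 b h)) 0 + J b 0 (hessL u (P2 b z) (P2 b h)))"
      by (simp add: G'_def J_split[symmetric])
    ultimately show ?thesis using has_derivative_add[OF a1 a2] by simp
  qed
  have fbound: "f (u x) \<le> C0 * (\<bar>W z\<bar> + 1) ^ n" if x: "x \<in> \<Omega>" and "u x \<le> \<bar>W z\<bar> + Lu" for x z
  proof -
    have "0 \<le> Lu * \<bar>W z\<bar>" using Lu0 by simp
    moreover have "(1 + Lu) * (\<bar>W z\<bar> + 1) = 1 + Lu + \<bar>W z\<bar> + Lu * \<bar>W z\<bar>" by (simp add: algebra_simps)
    ultimately have "max (u x) 0 \<le> (1 + Lu) * (\<bar>W z\<bar> + 1)" using that Lu0 by linarith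
    then have "max (u x) 0 ^ n \<le> ((1 + Lu) * (\<bar>W z\<bar> + 1)) ^ n" by (intro power_mono) auto
    then have "B * max (u x) 0 ^ n \<le> B * ((1 + Lu) ^ n * (\<bar>W z\<bar> + 1) ^ n)"
      using B by (intro mult_left_mono) (auto simp: power_mult_distrib)
    moreover have "A \<le> A * (\<bar>W z\<bar> + 1) ^ n" using A by (simp add: mult_le_cancel_left1 one_le_power)
    ultimately have "A + B * max (u x) 0 ^ n \<le> C0 * (\<bar>W z\<bar> + 1) ^ n"
      by (simp add: C0_def algebra_simps)
    then show ?thesis using fAB[of "u x"] by (simp add: n_def)
  qed
  have detb: "\<bar>det (matrix (G' z))\<bar> \<le> C0\<^sup>2 * (\<bar>W z\<bar> + 1) ^ CARD('n bit0)" if z: "z \<in> P" for z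
  proof -
    have z1: "P1 b z \<in> \<Omega>" and z2: "P2 b z \<in> \<Omega>" using z by (auto simp: P_def)
    have "det (matrix (G' z)) = f (u (P1 b z)) * f (u (P2 b z))"
      unfolding G'_def by (simp add: block_det[OF b linH[OF z1] linH[OF z2]] dh[OF z1] dh[OF z2])
    moreover have "f (u (P1 b z)) \<le> C0 * (\<bar>W z\<bar> + 1) ^ n"
      using Lu[OF z2] by (intro fbound[OF z1]) (simp add: W_def)
    moreover have "f (u (P2 b z)) \<le> C0 * (\<bar>W z\<bar> + 1) ^ n"
      using Lu[OF z1] by (intro fbound[OF z2]) (simp add: W_def)
    ultimately have "\<bar>det (matrix (G' z))\<bar> \<le> (C0 * (\<bar>W z\<bar> + 1) ^ n) * (C0 * (\<bar>W z\<bar> + 1) ^ n)"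
      using f_nonneg[of "u (P1 b z)"] f_nonneg[of "u (P2 b z)"]
      by (simp add: abs_mult) (meson mult_mono order_trans)
    also have "\<dots> = C0\<^sup>2 * (\<bar>W z\<bar> + 1) ^ CARD('n bit0)"
      by (simp add: n_def power2_eq_square power_add[symmetric] mult_2)
    finally show ?thesis .
  qed
  have cl: "closed {z\<in>P. W z \<le> c}" for c
  proof -
    define K where "K = {x\<in>\<Omega>. u x \<le> c + Lu}"
    have Kc: "closed K" unfolding K_def by (rule u_closed[OF \<Omega>o contu blow])
    define Z where "Z = P1 b -` K \<inter> P2 b -` K"
    have Zc: "closed Z" unfolding Z_def
      by (intro closed_Int continuous_closed_vimage Kc cont_lin linear_P1 linear_P2)
    have ZP: "Z \<subseteq> P" by (auto simp: Z_def K_def P_def)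
    have contW: "continuous_on P W"
      using dW by (meson continuous_at_imp_continuous_on has_derivative_continuous)
    have "{z\<in>P. W z \<le> c} = Z \<inter> W -` {..c}"
    proof
      show "{z \<in> P. W z \<le> c} \<subseteq> Z \<inter> W -` {..c}"
      proof
        fix z assume "z \<in> {z \<in> P. W z \<le> c}"
        then have z: "z \<in> P" "W z \<le> c" by auto
        have z1: "P1 b z \<in> \<Omega>" and z2: "P2 b z \<in> \<Omega>" using z by (auto simp: P_def)
        show "z \<in> Z \<inter> W -` {..c}"
          using z Lu[OF z1] Lu[OF z2] z1 z2 by (auto simp: Z_def K_def W_def)
      qed
      show "Z \<inter> W -` {..c} \<subseteq> {z \<in> P. W z \<le> c}" using ZP by auto
    qed
    also have "closed \<dots>"
      by (rule continuous_closed_preimage[OF continuous_on_subset[OF contW ZP] Zc]) simp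
    finally show ?thesis .
  qed
  have unb: "\<not> bdd_above (W ` P)"
  proof
    assume "bdd_above (W ` P)"
    then obtain M where M: "\<And>z. z \<in> P \<Longrightarrow> W z \<le> M" by (auto simp: bdd_above_def)
    have "u x \<le> M - u x0" if x: "x \<in> \<Omega>" for x
    proof -
      have "J b x x0 \<in> P" using x x0 b by (simp add: P_def PJ)
      then show ?thesis using M[of "J b x x0"] b by (simp add: W_def PJ)
    qed
    then have "bdd_above (u ` \<Omega>)" by (auto simp: bdd_above_def)
    then show False using u_unbounded[OF \<Omega>o \<Omega>_bdd \<Omega>ne blow] by blast
  qed
  have C2: "0 \<le> C0\<^sup>2" by simp
  show False
    using main_contra[OF Popen Pbdd Pconv Pne Wcvx dW dG detb C2 cl unb] .
qed

end
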